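(* For the linear regression for classification (LRC) problem $\min_{D}\|F-D\tilde{A}\|_F^2$, when the ideal graph condition for classification is satisfied, the fitting error achieves the minimum value, $\epsilon=1$, and the spectral risk is \[ \gamma=1+\frac{\bar{\zeta}}{\beta}, \] with \[ 1+\frac{1}{\zeta_\rho |\cos \theta_u|}\leq \gamma \leq 1+\frac{\zeta_\rho}{|\cos \theta_u|}. \]
   Context: Let $A=[A_1,\dots,A_n]\in\mathbb{R}^{p\times n}$ be a mean-removed data matrix ($A\mathbf{1}=\mathbf{0}$) and $F=[F_1,\dots,F_n]\in\mathbb{R}^{K\times n}$ the class indicator matrix ($F_i$ has a one in the entry of the class of sample $i$ and zeros elsewhere). Define $\beta\doteq-\min_{ij}(A^TA)_{ij}$ (which is positive) and the augmented data matrix $\tilde{A}=\begin{bmatrix}\sqrt{\beta}\mathbf{1}^T\\ A\end{bmatrix}$, assumed to have rank $p+1$, so that the LRC solution is $D^*=F\tilde{A}^T(\tilde{A}\tilde{A}^T)^{-1}$. Let $W\doteq\tilde{A}^T\tilde{A}$ (nonnegative by the choice of $\beta$). The ideal graph condition for classification holds if $W_{ij}=0$ whenever $F_i\neq F_j$. The (relative) fitting error is $\epsilon\doteq\|F-D^*\tilde{A}\|_F^2/\|D^*\tilde{A}\|_F^2+1$ and the (relative) spectral risk is $\gamma\doteq\|D^*\|_F^2\|\tilde{A}\|_F^2/\|D^*\tilde{A}\|_F^2$. Let $\bar{\zeta}\doteq\|A\|_F^2/n$ be the mean squared length of the original data, $\zeta_\rho\doteq\max_i\|A_i\|_2^2/\min_i\|A_i\|_2^2$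 the ratio between maximum and minimum squared lengths, and $\theta_u$ the maximum included angle between pairs of original data vectors $A_i,A_j$. *)

theory Defs
  imports "Jordan_Normal_Form.DL_Rank" "Jordan_Normal_Form.Gauss_Jordan_Elimination"
begin

definition frob_sq :: "real mat \<Rightarrow> real" where
  "frob_sq M = (\<Sum>i<dim_row M. \<Sum>j<dim_col M. (M $$ (i,j))^2)"

definition beta_of :: "real mat \<Rightarrow> real" where
  "beta_of A = - Min {(A\<^sup>T * A) $$ (i,j) | i j. i < dim_col A \<and> j < dim_col A}"

definition aug_mat :: "real mat \<Rightarrow> real mat" where
  "aug_mat A = mat (Suc (dim_row A)) (dim_col A)
     (\<lambda>(i,j). if i = 0 then sqrt (beta_of A) else A $$ (i - 1, j))"

definition lrc_sol :: "real mat \<Rightarrow> real mat \<Rightarrow> real mat" where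
  "lrc_sol F At = F * At\<^sup>T * the (mat_inverse (At * At\<^sup>T))"

definition fit_err :: "real mat \<Rightarrow> real mat \<Rightarrow> real" where
  "fit_err F At = frob_sq (F - lrc_sol F At * At) / frob_sq (lrc_sol F At * At) + 1"

definition spec_risk :: "real mat \<Rightarrow> real mat \<Rightarrow> real" where
  "spec_risk F At = frob_sq (lrc_sol F At) * frob_sq At / frob_sq (lrc_sol F At * At)"

definition incl_angle :: "real vec \<Rightarrow> real vec \<Rightarrow> real" where
  "incl_angle x y = arccos ((x \<bullet> y) / (sqrt (x \<bullet> x) * sqrt (y \<bullet> y)))"

definition zeta_bar :: "real mat \<Rightarrow> real" where
  "zeta_bar A = frob_sq A / real (dim_col A)"

definition zeta_rho :: "real mat \<Rightarrow> real" where
  "zeta_rho A = Max {col A i \<bullet> col A i | i. i < dim_col A} / Min {col A i \<bullet> col A i | i. i < dim_col A}"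

definition theta_u :: "real mat \<Rightarrow> real" where
  "theta_u A = Max {incl_angle (col A i) (col A j) | i j. i < dim_col A \<and> j < dim_col A}"

end

theory Submission
  imports Defs
begin



lemma frob_sq_tr: "frob_sq M = (\<Sum>i<dim_row M. (M * M\<^sup>T) $$ (i,i))"
  unfolding frob_sq_def
  by (intro sum.cong refl) (simp add: scalar_prod_def power2_eq_square atLeast0LessThan)

lemma frob_sq_smult: "frob_sq (a \<cdot>\<^sub>m M) = a^2 * frob_sq M"
  unfolding frob_sq_def by (simp add: sum_distrib_left power_mult_distrib)

lemma frob_sq_zero: "frob_sq (0\<^sub>m r c) = 0"
  unfolding frob_sq_def by simp



context vec_space begin
lemma full_rank_orth:
  assumes B: "B \<in> carrier_mat n nc" and r: "rank B = n"
    and v: "v \<in> carrier_vec n" and orth: "\<forall>j<nc. col B j \<bullet> v = 0"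
  shows "v \<bullet> v = 0"
proof -
  obtain S where S: "maximal S (\<lambda>T. T \<subseteq> set (cols B) \<and> lin_indpt T)"
    using maximal_exists[of "(\<lambda>T. T \<subseteq> set (cols B) \<and> lin_indpt T)" "card (set (cols B))" "{}"]
    by (meson List.finite_set card_mono empty_iff empty_subsetI finite_lin_indpt2 rev_finite_subset)
  have cS: "card S = n" using rank_card_indpt[OF B S] r by simp
  have SS: "S \<subseteq> set (cols B)" "lin_indpt S" using S unfolding maximal_def by auto
  have colsc: "set (cols B) \<subseteq> carrier_vec n" using B cols_dim by blast
  have fS: "finite S" using SS(1) finite_subset by blast
  have "basis S"
    by (rule dim_li_is_basis[OF fin_dim fS]) (use SS colsc cS dim_is_n in auto)
  then have "span S = carrier_vec n" unfolding basis_def by auto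
  moreover have "span S \<subseteq> span (set (cols B))" using span_is_monotone SS(1) by metis
  ultimately have vs: "v \<in> span (set (cols B))" using v by auto
  have "v \<in> orthogonal_complement (set (cols B))"
    unfolding orthogonal_complement_def
  proof (safe)
    show "v \<in> carrier_vec n" by fact
    fix y assume "y \<in> set (cols B)"
    then obtain j where j: "j < nc" "y = col B j" using B by (auto simp: cols_def)
    have "y \<in> carrier_vec n" using j B by auto
    then show "v \<bullet> y = 0" using orth j comm_scalar_prod[OF v] by metis
  qed
  then have "v \<in> orthogonal_complement (span (set (cols B)))"
    using in_orthogonal_complement_span[OF colsc] by simp
  then show ?thesis using vs unfolding orthogonal_complement_def by auto
qed
end



lemma sp_self_nonneg: "(x::real vec) \<bullet> x \<ge> 0"
  unfolding scalar_prod_def by (intro sum_nonneg) simp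

lemma cs_sq: assumes "dim_vec (x::real vec) = dim_vec y"
  shows "(x \<bullet> y)^2 \<le> (x \<bullet> x) * (y \<bullet> y)"
proof (cases "y \<bullet> y = 0")
  case True
  then have "\<forall>i\<in>{0..<dim_vec y}. y $ i * y $ i = 0"
    unfolding scalar_prod_def by (subst sum_nonneg_eq_0_iff[symmetric]) auto
  then have "x \<bullet> y = 0" unfolding scalar_prod_def by (intro sum.neutral) auto
  then show ?thesis using True by simp
next
  case False
  then have yp: "y \<bullet> y > 0" using sp_self_nonneg[of y] by linarith
  define t where "t = (x \<bullet> y) / (y \<bullet> y)"
  have "0 \<le> (\<Sum>i\<in>{0..<dim_vec y}. (x $ i - t * y $ i)^2)" by (intro sum_nonneg) simp
  also have "\<dots> = (\<Sum>i\<in>{0..<dim_vec y}. x $ i * x $ i) - 2 * t * (\<Sum>i\<in>{0..<dim_vec y}. x $ i * y $ i)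
     + t^2 * (\<Sum>i\<in>{0..<dim_vec y}. y $ i * y $ i)"
    by (simp add: power2_eq_square algebra_simps sum_subtractf sum.distrib sum_distrib_left)
  also have "\<dots> = x \<bullet> x - 2 * t * (x \<bullet> y) + t^2 * (y \<bullet> y)"
    using assms unfolding scalar_prod_def by simp
  also have "\<dots> = x \<bullet> x - (x \<bullet> y)^2 / (y \<bullet> y)"
    using yp unfolding t_def by (simp add: field_simps power2_eq_square)
  finally show ?thesis using yp by (simp add: field_simps)
qed
lemma final_ineq:
  fixes m Mx b u z :: real
  assumes "0<m" "m\<le>Mx" "0<b" "0<u" "b \<le> Mx*u" "m*u \<le> b" "m \<le> z" "z \<le> Mx"
  shows "1 + 1/((Mx/m)*u) \<le> 1 + z/b" "1 + z/b \<le> 1 + (Mx/m)/u"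
proof -
  have "1/((Mx/m)*u) = m/(Mx*u)" using assms by (simp add: field_simps)
  also have "\<dots> \<le> m/b" using assms by (intro divide_left_mono) auto
  also have "\<dots> \<le> z/b" using assms by (intro divide_right_mono) auto
  finally show "1 + 1/((Mx/m)*u) \<le> 1 + z/b" by simp
  have "z/b \<le> Mx/b" using assms by (intro divide_right_mono) auto
  also have "\<dots> \<le> Mx/(m*u)" using assms by (intro divide_left_mono) auto
  also have "\<dots> = (Mx/m)/u" by simp
  finally show "1 + z/b \<le> 1 + (Mx/m)/u" by simp
qed

lemma sp_zero: assumes "(w::real vec) \<bullet> w = 0" shows "w = 0\<^sub>v (dim_vec w)"
proof -
  have "\<forall>i\<in>{0..<dim_vec w}. w $ i * w $ i = 0"
    using assms unfolding scalar_prod_def by (subst sum_nonneg_eq_0_iff[symmetric]) auto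
  then show ?thesis by (intro eq_vecI) auto
qed

lemma div_bound: "\<bar>a::real\<bar> \<le> s \<Longrightarrow> 0 < s \<Longrightarrow> -1 \<le> a/s \<and> a/s \<le> 1"
  by (auto simp: divide_le_eq le_divide_eq abs_le_iff)

lemma cos_incl: assumes "dim_vec (x::real vec) = dim_vec y" "x \<bullet> x > 0" "y \<bullet> y > 0"
  shows "cos (incl_angle x y) = (x \<bullet> y) / (sqrt (x \<bullet> x) * sqrt (y \<bullet> y))"
    "0 \<le> incl_angle x y" "incl_angle x y \<le> pi"
proof -
  have "(x \<bullet> y)^2 \<le> (x \<bullet> x) * (y \<bullet> y)" using cs_sq assms by auto
  hence "sqrt ((x \<bullet> y)^2) \<le> sqrt ((x \<bullet> x) * (y \<bullet> y))" by (rule real_sqrt_le_mono)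
  hence "\<bar>x \<bullet> y\<bar> \<le> sqrt (x \<bullet> x) * sqrt (y \<bullet> y)" by (simp add: real_sqrt_mult)
  moreover have "sqrt (x \<bullet> x) * sqrt (y \<bullet> y) > 0" using assms by simp
  ultimately have "-1 \<le> (x \<bullet> y) / (sqrt (x \<bullet> x) * sqrt (y \<bullet> y)) \<and> (x \<bullet> y) / (sqrt (x \<bullet> x) * sqrt (y \<bullet> y)) \<le> 1"
    by (rule div_bound)
  then have "-1 \<le> (x \<bullet> y) / (sqrt (x \<bullet> x) * sqrt (y \<bullet> y))" "(x \<bullet> y) / (sqrt (x \<bullet> x) * sqrt (y \<bullet> y)) \<le> 1"
    by blast+
  then show "cos (incl_angle x y) = (x \<bullet> y) / (sqrt (x \<bullet> x) * sqrt (y \<bullet> y))"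
    "0 \<le> incl_angle x y" "incl_angle x y \<le> pi"
    unfolding incl_angle_def by (auto intro: arccos_lbound arccos_ubound)
qed





theorem theorem6:
  fixes A F :: "real mat" and p n K :: nat
  assumes A_dim: "A \<in> carrier_mat p n"
    and F_dim: "F \<in> carrier_mat K n"
    and mean_removed: "A *\<^sub>v vec n (\<lambda>_. 1) = 0\<^sub>v p"
    and F_ind: "\<forall>j<n. \<exists>k<K. col F j = unit_vec K k"
    and nonzero: "\<forall>i<n. col A i \<noteq> 0\<^sub>v p"
    and rank: "vec_space.rank (Suc p) (aug_mat A) = Suc p"
    and ideal: "\<forall>i<n. \<forall>j<n. col F i \<noteq> col F j \<longrightarrow> ((aug_mat A)\<^sup>T * aug_mat A) $$ (i,j) = 0"
  shows "fit_err F (aug_mat A) = 1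
    \<and> spec_risk F (aug_mat A) = 1 + zeta_bar A / beta_of A
    \<and> 1 + 1 / (zeta_rho A * \<bar>cos (theta_u A)\<bar>) \<le> spec_risk F (aug_mat A)
    \<and> spec_risk F (aug_mat A) \<le> 1 + zeta_rho A / \<bar>cos (theta_u A)\<bar>"
proof -
  define At where "At = aug_mat A"
  define \<beta> where "\<beta> = beta_of A"
  have dA: "dim_row A = p" "dim_col A = n" using A_dim by auto
  have At_c: "At \<in> carrier_mat (Suc p) n" unfolding At_def aug_mat_def using dA by auto
  have At0: "At $$ (0,j) = sqrt \<beta>" if "j < n" for j
    unfolding At_def aug_mat_def \<beta>_def using that dA by simp
  have AtS: "At $$ (Suc r,j) = A $$ (r,j)" if "j < n" "r < p" for j r
    unfolding At_def aug_mat_def using that dA by simp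
  have npos: "0 < n"
  proof -
    have "vec_space.rank (Suc p) At \<le> n" using vec_space.rank_le_nc[OF At_c] .
    then show ?thesis using rank unfolding At_def by simp
  qed
  have rowsum: "(\<Sum>j<n. A $$ (r,j)) = 0" if "r < p" for r
  proof -
    have "(A *\<^sub>v vec n (\<lambda>_. 1)) $ r = 0" using mean_removed that by simp
    then show ?thesis using that dA by (simp add: scalar_prod_def atLeast0LessThan)
  qed
  have colip: "col A i \<bullet> col A j = (\<Sum>r<p. A $$ (r,i) * A $$ (r,j))" if "i < n" "j < n" for i j
    using that dA by (simp add: scalar_prod_def atLeast0LessThan)
  have ATA: "(A\<^sup>T * A) $$ (i,j) = col A i \<bullet> col A j" if "i < n" "j < n" for i j
    using that dA by simp
  have diagpos: "col A i \<bullet> col A i > 0" if "i < n" for i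
  proof -
    have "col A i \<bullet> col A i \<noteq> 0"
    proof
      assume "col A i \<bullet> col A i = 0"
      then have "col A i = 0\<^sub>v p" using sp_zero[of "col A i"] dA by simp
      then show False using nonzero that by auto
    qed
    then show ?thesis using sp_self_nonneg[of "col A i"] by linarith
  qed
  define Sm where "Sm = {(A\<^sup>T * A) $$ (i,j) | i j. i < n \<and> j < n}"
  have Sm_img: "Sm = (\<lambda>(i,j). col A i \<bullet> col A j) ` ({..<n} \<times> {..<n})"
    unfolding Sm_def using ATA by force
  have Sm_fin: "finite Sm" "Sm \<noteq> {}" using npos unfolding Sm_img by auto
  have beta_eq: "\<beta> = - Min Sm" unfolding \<beta>_def beta_of_def Sm_def dA by simp
  have totsum: "(\<Sum>i<n. \<Sum>j<n. col A i \<bullet> col A j) = 0"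
  proof -
    have "(\<Sum>i<n. \<Sum>j<n. col A i \<bullet> col A j) = (\<Sum>i<n. \<Sum>j<n. \<Sum>r<p. A $$ (r,i) * A $$ (r,j))"
      using colip by simp
    also have "\<dots> = (\<Sum>i<n. \<Sum>r<p. \<Sum>j<n. A $$ (r,i) * A $$ (r,j))"
      by (rule sum.cong[OF refl], rule sum.swap)
    also have "\<dots> = (\<Sum>r<p. \<Sum>i<n. \<Sum>j<n. A $$ (r,i) * A $$ (r,j))"
      by (rule sum.swap)
    also have "\<dots> = (\<Sum>r<p. (\<Sum>i<n. A $$ (r,i)) * (\<Sum>j<n. A $$ (r,j)))"
      by (simp add: sum_product)
    also have "\<dots> = 0" using rowsum by simp
    finally show ?thesis .
  qed
  have neg_exists: "\<exists>i<n. \<exists>j<n. col A i \<bullet> col A j < 0"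
  proof (rule ccontr)
    assume "\<not> ?thesis"
    then have nn: "\<forall>i<n. \<forall>j<n. col A i \<bullet> col A j \<ge> 0" by force
    have "0 < (\<Sum>i<n. col A i \<bullet> col A i)" using npos diagpos by (intro sum_pos) auto
    also have "\<dots> \<le> (\<Sum>i<n. \<Sum>j<n. col A i \<bullet> col A j)"
    proof (intro sum_mono)
      fix i assume i: "i \<in> {..<n}"
      have "(\<Sum>j\<in>{i}. col A i \<bullet> col A j) \<le> (\<Sum>j<n. col A i \<bullet> col A j)"
        using i nn by (intro sum_mono2) auto
      then show "col A i \<bullet> col A i \<le> (\<Sum>j<n. col A i \<bullet> col A j)" by simp
    qed
    finally show False using totsum by simp
  qed
  obtain i0 j0 where ij0: "i0 < n" "j0 < n" "\<beta> = - (col A i0 \<bullet> col A j0)"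
  proof -
    have "Min Sm \<in> Sm" using Min_in Sm_fin by blast
    then show ?thesis using that beta_eq unfolding Sm_img by auto
  qed
  have beta_le: "\<beta> \<ge> - (col A i \<bullet> col A j)" if "i < n" "j < n" for i j
  proof -
    have "col A i \<bullet> col A j \<in> Sm" unfolding Sm_img using that by auto
    then show ?thesis using Min_le Sm_fin beta_eq by fastforce
  qed
  have beta_pos: "\<beta> > 0" using neg_exists beta_le by force
  have colAtA: "col At i \<bullet> col At j = \<beta> + col A i \<bullet> col A j" if "i < n" "j < n" for i j
  proof -
    have "col At i \<bullet> col At j = (\<Sum>r<Suc p. At $$ (r,i) * At $$ (r,j))"
      using that At_c by (simp add: scalar_prod_def atLeast0LessThan)
    also have "\<dots> = At $$ (0,i) * At $$ (0,j) + (\<Sum>r<p. At $$ (Suc r,i) * At $$ (Suc r,j))"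
      by (rule sum.lessThan_Suc_shift)
    also have "\<dots> = \<beta> + (\<Sum>r<p. A $$ (r,i) * A $$ (r,j))"
      using that At0 AtS beta_pos by simp
    finally show ?thesis using colip that by simp
  qed
  define W where "W = At\<^sup>T * At"
  have W_c: "W \<in> carrier_mat n n" unfolding W_def using At_c by auto
  have W_ij: "W $$ (i,j) = \<beta> + col A i \<bullet> col A j" if "i < n" "j < n" for i j
    unfolding W_def using that At_c colAtA by simp
  have Wsum: "(\<Sum>i<n. W $$ (i,j)) = real n * \<beta>" if "j < n" for j
  proof -
    have "(\<Sum>i<n. W $$ (i,j)) = (\<Sum>i<n. \<beta> + (\<Sum>r<p. A $$ (r,i) * A $$ (r,j)))"
      using W_ij colip that by simp
    also have "\<dots> = real n * \<beta> + (\<Sum>i<n. \<Sum>r<p. A $$ (r,i) * A $$ (r,j))"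
      by (simp add: sum.distrib)
    also have "(\<Sum>i<n. \<Sum>r<p. A $$ (r,i) * A $$ (r,j)) = (\<Sum>r<p. \<Sum>i<n. A $$ (r,i) * A $$ (r,j))"
      by (rule sum.swap)
    also have "\<dots> = (\<Sum>r<p. (\<Sum>i<n. A $$ (r,i)) * A $$ (r,j))"
      by (simp add: sum_distrib_right)
    also have "\<dots> = 0" using rowsum by simp
    finally show ?thesis by simp
  qed
  obtain c where c: "\<And>j. j < n \<Longrightarrow> c j < K \<and> col F j = unit_vec K (c j)"
    using F_ind by metis
  have Fkj: "F $$ (k,j) = (if k = c j then 1 else 0)" if "k < K" "j < n" for k j
  proof -
    have "F $$ (k,j) = col F j $ k" using that F_dim by simp
    then show ?thesis using c[OF that(2)] that by simp
  qed
  have Wzero: "W $$ (i,j) = 0" if "i < n" "j < n" "c i \<noteq> c j" for i j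
  proof -
    have "col F i \<noteq> col F j"
    proof
      assume "col F i = col F j"
      then have "col F i $ c i = col F j $ c i" by simp
      then show False using c[OF that(1)] c[OF that(2)] that(3) by simp
    qed
    then show ?thesis using ideal that unfolding W_def At_def by blast
  qed
  have FW: "F * W = (real n * \<beta>) \<cdot>\<^sub>m F"
  proof (rule eq_matI)
    fix k j assume kj: "k < dim_row ((real n * \<beta>) \<cdot>\<^sub>m F)" "j < dim_col ((real n * \<beta>) \<cdot>\<^sub>m F)"
    then have k: "k < K" and j: "j < n" using F_dim by auto
    have "(F * W) $$ (k,j) = (\<Sum>i<n. F $$ (k,i) * W $$ (i,j))"
      using k j F_dim W_c by (simp add: scalar_prod_def atLeast0LessThan)
    also have "\<dots> = (\<Sum>i<n. if k = c j then W $$ (i,j) else 0)"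
    proof (rule sum.cong[OF refl])
      fix i assume "i \<in> {..<n}"
      then have i: "i < n" by simp
      show "F $$ (k,i) * W $$ (i,j) = (if k = c j then W $$ (i,j) else 0)"
        using Fkj[OF k i] Wzero[OF i j] by auto
    qed
    also have "\<dots> = (if k = c j then real n * \<beta> else 0)" using Wsum[OF j] by simp
    also have "\<dots> = ((real n * \<beta>) \<cdot>\<^sub>m F) $$ (k,j)" using Fkj[OF k j] k j F_dim by simp
    finally show "(F * W) $$ (k,j) = ((real n * \<beta>) \<cdot>\<^sub>m F) $$ (k,j)" .
  qed (use F_dim W_c in auto)
  define G where "G = At * At\<^sup>T"
  have G_c: "G \<in> carrier_mat (Suc p) (Suc p)" unfolding G_def using At_c by auto
  have detG: "det G \<noteq> 0"
  proof
    assume "det G = 0"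
    then obtain v where v: "v \<in> carrier_vec (Suc p)" "v \<noteq> 0\<^sub>v (Suc p)" "G *\<^sub>v v = 0\<^sub>v (Suc p)"
      using det_0_iff_vec_prod_zero_field[OF G_c] by blast
    define u where "u = At\<^sup>T *\<^sub>v v"
    have u_c: "u \<in> carrier_vec n" unfolding u_def using At_c v by auto
    have "u \<bullet> u = v \<bullet> (At *\<^sub>v u)"
      unfolding u_def by (rule transpose_vec_mult_scalar[OF At_c _ v(1)]) (use u_c u_def in simp)
    also have "At *\<^sub>v u = G *\<^sub>v v" unfolding u_def G_def using At_c v by auto
    finally have "u \<bullet> u = 0" using v by simp
    then have u0: "u = 0\<^sub>v n" using sp_zero[of u] u_c by simp
    have orth: "\<forall>j<n. col At j \<bullet> v = 0"
    proof (intro allI impI)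
      fix j assume j: "j < n"
      have "u $ j = row At\<^sup>T j \<bullet> v" unfolding u_def using j At_c by simp
      then show "col At j \<bullet> v = 0" using u0 j At_c by simp
    qed
    have "v \<bullet> v = 0"
      by (rule vec_space.full_rank_orth[OF At_c _ v(1) orth]) (use rank At_def in simp)
    then have "v = 0\<^sub>v (Suc p)" using sp_zero[of v] v by simp
    then show False using v by simp
  qed
  obtain M where M: "mat_inverse G = Some M"
  proof (cases "mat_inverse G")
    case None
    show ?thesis using det_non_zero_imp_unit[OF G_c detG, of "()"] mat_inverse(1)[OF G_c None, of "()"] by blast
  next
    case (Some B) then show ?thesis using that by blast
  qed
  have GM: "G * M = 1\<^sub>m (Suc p)" and M_c: "M \<in> carrier_mat (Suc p) (Suc p)"
    using mat_inverse(2)[OF G_c M] by auto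
  have AtT_c: "At\<^sup>T \<in> carrier_mat n (Suc p)" using At_c by auto
  have FT_c: "F\<^sup>T \<in> carrier_mat n K" using F_dim by auto
  define E where "E = F * At\<^sup>T"
  have E_c: "E \<in> carrier_mat K (Suc p)" unfolding E_def using F_dim At_c by auto
  have nb: "real n * \<beta> > 0" using npos beta_pos by simp
  have EG: "E * G = (real n * \<beta>) \<cdot>\<^sub>m E"
  proof -
    have FAt_c: "F * At\<^sup>T \<in> carrier_mat K (Suc p)" using F_dim AtT_c by auto
    have "E * G = F * At\<^sup>T * At * At\<^sup>T"
      unfolding E_def G_def using assoc_mult_mat[OF FAt_c At_c AtT_c] by simp
    also have "F * At\<^sup>T * At = F * W" unfolding W_def using assoc_mult_mat[OF F_dim AtT_c At_c] by simp
    finally have "E * G = F * W * At\<^sup>T" .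
    also have "\<dots> = (real n * \<beta>) \<cdot>\<^sub>m E" unfolding FW E_def
      using mult_smult_assoc_mat[OF F_dim AtT_c] by simp
    finally show ?thesis .
  qed
  define D where "D = E * M"
  have D_c: "D \<in> carrier_mat K (Suc p)" unfolding D_def using E_c M_c by auto
  have "E = E * G * M" using E_c G_c M_c GM by (simp add: assoc_mult_mat[of _ K "Suc p" _ "Suc p"])
  also have "\<dots> = (real n * \<beta>) \<cdot>\<^sub>m D" unfolding EG D_def using mult_smult_assoc_mat[OF E_c M_c] by simp
  finally have ED: "E = (real n * \<beta>) \<cdot>\<^sub>m D" .
  have D_E: "D = (1 / (real n * \<beta>)) \<cdot>\<^sub>m E"
    by (rule eq_matI) (use ED D_c E_c nb in auto)
  have DAt: "D * At = F"
  proof -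
    have "D * At = (1 / (real n * \<beta>)) \<cdot>\<^sub>m (F * W)"
      unfolding D_E E_def W_def using mult_smult_assoc_mat[OF E_c At_c] F_dim At_c AtT_c E_def
      by (simp add: assoc_mult_mat[of _ K n _ "Suc p"])
    also have "\<dots> = F" unfolding FW by (rule eq_matI) (use nb F_dim in auto)
    finally show ?thesis .
  qed
  have lrc: "lrc_sol F At = D" unfolding lrc_sol_def D_def E_def G_def[symmetric] M by simp
  have frobF: "frob_sq F = real n"
  proof -
    have "frob_sq F = (\<Sum>k<K. \<Sum>j<n. (if k = c j then 1 else 0))"
      unfolding frob_sq_def using F_dim Fkj by (intro sum.cong refl) auto
    also have "\<dots> = (\<Sum>j<n. \<Sum>k<K. (if k = c j then 1 else 0))" by (rule sum.swap)
    also have "\<dots> = (\<Sum>j<n. 1)" using c by (intro sum.cong refl) auto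
    finally show ?thesis by simp
  qed
  have frobE: "frob_sq E = real n * \<beta> * real n"
  proof -
    have FAt_c: "F * At\<^sup>T \<in> carrier_mat K (Suc p)" using F_dim AtT_c by auto
    have "E * E\<^sup>T = F * At\<^sup>T * (At * F\<^sup>T)"
      unfolding E_def using transpose_mult[OF F_dim AtT_c] by simp
    also have "\<dots> = F * At\<^sup>T * At * F\<^sup>T" using assoc_mult_mat[OF FAt_c At_c FT_c] by simp
    also have "F * At\<^sup>T * At = F * W" unfolding W_def using assoc_mult_mat[OF F_dim AtT_c At_c] by simp
    finally have "E * E\<^sup>T = F * W * F\<^sup>T" .
    also have "\<dots> = (real n * \<beta>) \<cdot>\<^sub>m (F * F\<^sup>T)" unfolding FW
      using mult_smult_assoc_mat[OF F_dim FT_c] by simp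
    finally have "E * E\<^sup>T = (real n * \<beta>) \<cdot>\<^sub>m (F * F\<^sup>T)" .
    then have "frob_sq E = (\<Sum>i<K. ((real n * \<beta>) \<cdot>\<^sub>m (F * F\<^sup>T)) $$ (i,i))"
      using frob_sq_tr[of E] E_c by simp
    also have "\<dots> = real n * \<beta> * (\<Sum>i<K. (F * F\<^sup>T) $$ (i,i))"
      using F_dim by (simp add: sum_distrib_left)
    also have "(\<Sum>i<K. (F * F\<^sup>T) $$ (i,i)) = frob_sq F" using frob_sq_tr[of F] F_dim by simp
    finally show ?thesis using frobF by simp
  qed
  have frobD: "frob_sq D = 1 / \<beta>"
    unfolding D_E frob_sq_smult frobE using npos beta_pos by (simp add: power2_eq_square field_simps)
  have frobAt: "frob_sq At = real n * \<beta> + frob_sq A"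
  proof -
    have "frob_sq At = (\<Sum>i<Suc p. \<Sum>j<n. (At $$ (i,j))^2)" unfolding frob_sq_def using At_c by simp
    also have "\<dots> = (\<Sum>j<n. (At $$ (0,j))^2) + (\<Sum>i<p. \<Sum>j<n. (At $$ (Suc i,j))^2)"
      by (rule sum.lessThan_Suc_shift)
    also have "(\<Sum>j<n. (At $$ (0,j))^2) = real n * \<beta>" using At0 beta_pos by simp
    also have "(\<Sum>i<p. \<Sum>j<n. (At $$ (Suc i,j))^2) = frob_sq A"
      unfolding frob_sq_def dA using AtS by simp
    finally show ?thesis .
  qed
  have fit: "fit_err F (aug_mat A) = 1"
    unfolding fit_err_def At_def[symmetric] lrc DAt frob_sq_def by simp
  have spec: "spec_risk F (aug_mat A) = 1 + zeta_bar A / beta_of A"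
    unfolding spec_risk_def At_def[symmetric] lrc DAt frobD frobAt frobF zeta_bar_def \<beta>_def[symmetric] dA
    using npos beta_pos by (simp add: field_simps)
  define L where "L = (\<lambda>i. col A i \<bullet> col A i) ` {..<n}"
  have L_fin: "finite L" "L \<noteq> {}" unfolding L_def using npos by auto
  define m where "m = Min L"
  define Mx where "Mx = Max L"
  have zr: "zeta_rho A = Mx / m"
  proof -
    have "{col A i \<bullet> col A i | i. i < dim_col A} = L" unfolding L_def dA by auto
    then show ?thesis unfolding zeta_rho_def m_def Mx_def by simp
  qed
  have m_le: "m \<le> col A i \<bullet> col A i" if "i < n" for i
    unfolding m_def using L_fin that by (intro Min_le) (auto simp: L_def)
  have Mx_ge: "col A i \<bullet> col A i \<le> Mx" if "i < n" for i
    unfolding Mx_def using L_fin that by (intro Max_ge) (auto simp: L_def)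
  have m_pos: "m > 0"
  proof -
    have "m \<in> L" unfolding m_def using L_fin by (rule Min_in)
    then show ?thesis using diagpos unfolding L_def by auto
  qed
  have fA: "frob_sq A = (\<Sum>j<n. col A j \<bullet> col A j)"
  proof -
    have "frob_sq A = (\<Sum>i<p. \<Sum>j<n. (A $$ (i,j))^2)" unfolding frob_sq_def dA ..
    also have "\<dots> = (\<Sum>j<n. \<Sum>i<p. (A $$ (i,j))^2)" by (rule sum.swap)
    also have "\<dots> = (\<Sum>j<n. col A j \<bullet> col A j)"
      using colip by (intro sum.cong refl) (simp add: power2_eq_square)
    finally show ?thesis .
  qed
  have fA_lo: "real n * m \<le> frob_sq A"
  proof -
    have "(\<Sum>j<n. m) \<le> (\<Sum>j<n. col A j \<bullet> col A j)" using m_le by (intro sum_mono) auto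
    then show ?thesis using fA by simp
  qed
  have fA_hi: "frob_sq A \<le> real n * Mx"
  proof -
    have "(\<Sum>j<n. col A j \<bullet> col A j) \<le> (\<Sum>j<n. Mx)" using Mx_ge by (intro sum_mono) auto
    then show ?thesis using fA by simp
  qed
  have zb: "zeta_bar A = frob_sq A / real n" unfolding zeta_bar_def dA ..
  define \<Theta> where "\<Theta> = (\<lambda>(i,j). incl_angle (col A i) (col A j)) ` ({..<n} \<times> {..<n})"
  have T_fin: "finite \<Theta>" "\<Theta> \<noteq> {}" unfolding \<Theta>_def using npos by auto
  have tu: "theta_u A = Max \<Theta>"
  proof -
    have "{incl_angle (col A i) (col A j) | i j. i < dim_col A \<and> j < dim_col A} = \<Theta>"
      unfolding \<Theta>_def dA by force
    then show ?thesis unfolding theta_u_def by simp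
  qed
  obtain a b where ab: "a < n" "b < n" "theta_u A = incl_angle (col A a) (col A b)"
  proof -
    have "Max \<Theta> \<in> \<Theta>" using T_fin by (rule Max_in)
    then show ?thesis using that tu unfolding \<Theta>_def by auto
  qed
  have tu_ge: "incl_angle (col A i) (col A j) \<le> theta_u A" if "i < n" "j < n" for i j
    unfolding tu using T_fin that by (intro Max_ge) (auto simp: \<Theta>_def)
  define s where "s i = sqrt (col A i \<bullet> col A i)" for i
  have s_pos: "s i > 0" if "i < n" for i unfolding s_def using diagpos[OF that] by simp
  have ci: "cos (incl_angle (col A i) (col A j)) = (col A i \<bullet> col A j) / (s i * s j)"
    "0 \<le> incl_angle (col A i) (col A j)" "incl_angle (col A i) (col A j) \<le> pi"
    if "i < n" "j < n" for i j
    using cos_incl[of "col A i" "col A j"] that diagpos dA unfolding s_def by auto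
  define cu where "cu = cos (theta_u A)"
  have cu_eq: "cu = (col A a \<bullet> col A b) / (s a * s b)" unfolding cu_def ab(3) using ci ab by simp
  have cu_le: "cu \<le> (col A i0 \<bullet> col A j0) / (s i0 * s j0)"
    unfolding cu_def using ci[OF ij0(1,2)] cos_monotone_0_pi_le[of "incl_angle (col A i0) (col A j0)" "theta_u A"]
      tu_ge[OF ij0(1,2)] ci(3)[OF ab(1,2)] ab(3) by simp
  have sp0: "s i0 * s j0 > 0" using s_pos ij0 by simp
  have spab: "s a * s b > 0" using s_pos ab by simp
  have q0neg: "(col A i0 \<bullet> col A j0) / (s i0 * s j0) < 0"
    using ij0(3) beta_pos sp0 by (simp add: divide_neg_pos)
  define u where "u = - cu"
  have u_pos: "u > 0" using cu_le q0neg unfolding u_def by linarith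
  have abs_cu: "\<bar>cos (theta_u A)\<bar> = u" using u_pos unfolding u_def cu_def by simp
  have s_hi: "s i \<le> sqrt Mx" if "i < n" for i unfolding s_def using Mx_ge[OF that] by simp
  have s_lo: "sqrt m \<le> s i" if "i < n" for i unfolding s_def using m_le[OF that] by simp
  have b_hi: "\<beta> \<le> Mx * u"
  proof -
    have "\<beta> = - ((col A i0 \<bullet> col A j0) / (s i0 * s j0)) * (s i0 * s j0)" using ij0(3) s_pos[OF ij0(1)] s_pos[OF ij0(2)] by simp
    also have "\<dots> \<le> u * (s i0 * s j0)" using cu_le sp0 unfolding u_def by (intro mult_right_mono) auto
    also have "\<dots> \<le> u * (sqrt Mx * sqrt Mx)"
      using s_hi ij0 s_pos u_pos Mx_ge[OF ij0(1)] diagpos[OF ij0(1)] by (intro mult_left_mono mult_mono) (auto intro: less_imp_le)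
    also have "\<dots> = Mx * u" using m_pos Mx_ge[OF ij0(1)] diagpos[OF ij0(1)] by simp
    finally show ?thesis .
  qed
  have b_lo: "m * u \<le> \<beta>"
  proof -
    have "m * u = u * (sqrt m * sqrt m)" using m_pos by simp
    also have "\<dots> \<le> u * (s a * s b)"
      using s_lo ab m_pos u_pos s_pos[OF ab(1)] by (intro mult_left_mono mult_mono) auto
    also have "\<dots> = - (col A a \<bullet> col A b)" unfolding u_def cu_eq using s_pos[OF ab(1)] s_pos[OF ab(2)] by simp
    also have "\<dots> \<le> \<beta>" using beta_le ab by simp
    finally show ?thesis .
  qed
  have mMx: "m \<le> Mx" using m_le Mx_ge npos by (meson order_trans)
  have z_lo: "m \<le> frob_sq A / real n" using fA_lo npos by (simp add: field_simps)
  have z_hi: "frob_sq A / real n \<le> Mx" using fA_hi npos by (simp add: field_simps)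
  note fi = final_ineq[OF m_pos mMx beta_pos u_pos b_hi b_lo z_lo z_hi]
  show ?thesis
    using fit spec fi unfolding zr abs_cu zb \<beta>_def by simp
qed
end
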